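(* Let $K>1$ and $\alpha_1,\dots,\alpha_K>0$, and let $p_0^{(k)} = \mathcal{N}(\mathbf{0}, \alpha_k \mathbf{I})$ on $\mathbb{R}^d$ for all $k \leq K$. Denote the Product of Experts (PoE) of these distributions by $p^{\mathrm{PoE}}_0 \coloneqq \mathrm{PoE}(p_0^{(1)}, \dots, p_0^{(K)})$. For any density $q_0$, write $q_t$ for the marginal distribution at time $t$ obtained by diffusing $q_0$ under the forward Variance Preserving SDE $\mathrm{d}\mathbf{z}_t = -\beta_t \mathbf{z}_t\,\mathrm{d}t + \sqrt{2\beta_t}\,\mathrm{d}\mathbf{w}_t$, $0\le t\le T$, $\mathbf{z}_0\sim q_0$ (so $p^{\mathrm{PoE}}_t$ is the diffusion of $p^{\mathrm{PoE}}_0$ and $p^{(k)}_t$ is the diffusion of $p^{(k)}_0$). Then, for any $t>0$, $p^{\mathrm{PoE}}_t \neq \mathrm{PoE}(p^{(1)}_t, \dots, p^{(K)}_t)$ unless $\alpha_1 = \dots = \alpha_K$.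
   Context: The Product of Experts of $K$ densities $p^{(1)},\dots,p^{(K)}$ on $\mathbb{R}^d$ is their normalized geometric mean: $\mathrm{PoE}(p^{(1)},\dots,p^{(K)})(\mathbf{x}) \coloneqq \sqrt[K]{p^{(1)}(\mathbf{x})\cdots p^{(K)}(\mathbf{x})}/Z_K$ with $Z_K = \int \sqrt[K]{p^{(1)}(\mathbf{x})\cdots p^{(K)}(\mathbf{x})}\,\mathrm{d}\mathbf{x}$. Its score is the arithmetic mean of the individual scores. Under the VP SDE above, the strong solution is $\mathbf{z}_t = \gamma_t \mathbf{z}_0 + \eta_t$ with deterministic $\gamma_t\in(0,1)$ and Gaussian noise $\eta_t$ independent of $\mathbf{z}_0$, so that if $\mathbf{z}_0\sim\mathcal{N}(\mathbf{0},\boldsymbol{\Sigma})$ then $\mathbf{z}_t\sim\mathcal{N}(\mathbf{0},\gamma_t\boldsymbol{\Sigma}+(1-\gamma_t)\mathbf{I})$. *)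

theory Defs
  imports "HOL-Analysis.Analysis"
begin

definition gauss_density :: "real ^ 'd \<Rightarrow> real \<Rightarrow> real ^ 'd \<Rightarrow> real" where
  "gauss_density mu v x =
     (2 * pi * v) powr (- real CARD('d) / 2) * exp (- (norm (x - mu))\<^sup>2 / (2 * v))"

definition PoE :: "nat \<Rightarrow> (nat \<Rightarrow> real ^ 'd \<Rightarrow> real) \<Rightarrow> real ^ 'd \<Rightarrow> real" where
  "PoE K p x =
     (\<Prod>k\<in>{1..K}. p k x) powr (1 / real K) /
     (\<integral>y. (\<Prod>k\<in>{1..K}. p k y) powr (1 / real K) \<partial>lborel)"

text \<open>Marginal density at time t of the forward VP SDE
  dz = -beta_t z dt + sqrt(2 beta_t) dw started from density q:
  z_t = m_t z_0 + eta_t with m_t = exp(-int_0^t beta) and eta_t ~ N(0, (1 - m_t^2) I)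
  independent of z_0.\<close>
definition vp_marginal :: "(real \<Rightarrow> real) \<Rightarrow> real \<Rightarrow> (real ^ 'd \<Rightarrow> real) \<Rightarrow> real ^ 'd \<Rightarrow> real" where
  "vp_marginal beta t q x =
     (let m = exp (- integral {0..t} beta)
      in \<integral>y. q y * gauss_density (m *\<^sub>R y) (1 - m\<^sup>2) x \<partial>lborel)"

end

theory Submission
  imports Defs "HOL-Probability.Distributions"
begin

lemma gauss1:
  fixes s :: real assumes s: "s > 0"
  shows "has_bochner_integral lborel (\<lambda>y. exp (- s * y\<^sup>2)) (sqrt (pi / s))"
proof -
  have eq: "(\<lambda>y. exp (- s * y\<^sup>2)) = (\<lambda>y. normal_density 0 (sqrt (1 / (2 * s))) y * sqrt (pi / s))"
    using s pi_gt_zero by (auto simp: fun_eq_iff normal_density_def real_sqrt_divide real_sqrt_mult field_simps)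
  have "has_bochner_integral lborel (normal_density 0 (sqrt (1 / (2 * s)))) 1"
    using s by (simp add: has_bochner_integral_iff integrable_normal_density integral_normal_density)
  from has_bochner_integral_mult_left[OF this, of "sqrt (pi / s)"]
  show ?thesis unfolding eq by simp
qed

lemma norm_sq_basis: "(norm (x::'a::euclidean_space))\<^sup>2 = (\<Sum>b\<in>Basis. (x \<bullet> b)\<^sup>2)"
  by (subst power2_norm_eq_inner, subst euclidean_inner) (simp add: power2_eq_square)

lemma gauss_int:
  fixes s :: real assumes s: "s > 0"
  shows "integrable lborel (\<lambda>x::'a::euclidean_space. exp (- s * (norm x)\<^sup>2))"
    and "(\<integral>x. exp (- s * (norm (x::'a))\<^sup>2) \<partial>lborel) > 0"
proof -
  have m: "(\<lambda>x::'a. exp (- s * (norm x)\<^sup>2)) \<in> borel_measurable lborel" by measurable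
  have nn1: "(\<integral>\<^sup>+y. ennreal (exp (- s * y\<^sup>2)) \<partial>lborel) = ennreal (sqrt (pi / s))"
    using gauss1[OF s] by (subst nn_integral_eq_integral) (auto simp: has_bochner_integral_iff)
  have "(\<integral>\<^sup>+x. ennreal (exp (- s * (norm (x::'a))\<^sup>2)) \<partial>lborel)
       = (\<integral>\<^sup>+x. (\<Prod>b\<in>Basis. exp (- s * ((x::'a) \<bullet> b)\<^sup>2)) \<partial>lborel)"
    by (simp add: norm_sq_basis sum_distrib_left exp_sum)
  also have "\<dots> = (\<integral>\<^sup>+x. (\<Prod>b\<in>Basis. ennreal (exp (- s * ((x::'a) \<bullet> b)\<^sup>2))) \<partial>lborel)"
    by (simp add: prod_ennreal)
  also have "\<dots> = (\<Prod>b\<in>(Basis::'a set). (\<integral>\<^sup>+y. exp (- s * y\<^sup>2) \<partial>lborel))"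
    by (rule nn_integral_lborel_prod) auto
  also have "\<dots> = ennreal (sqrt (pi / s) ^ DIM('a))"
    unfolding nn1 prod_constant by (rule ennreal_power) (use s in simp)
  finally have nn: "(\<integral>\<^sup>+x. ennreal (exp (- s * (norm (x::'a))\<^sup>2)) \<partial>lborel) = ennreal (sqrt (pi / s) ^ DIM('a))" .
  show "integrable lborel (\<lambda>x::'a. exp (- s * (norm x)\<^sup>2))"
    using nn by (intro integrableI_nonneg[OF m]) auto
  have "(\<integral>x. exp (- s * (norm (x::'a))\<^sup>2) \<partial>lborel) = enn2real (\<integral>\<^sup>+x. ennreal (exp (- s * (norm (x::'a))\<^sup>2)) \<partial>lborel)"
    by (rule integral_eq_nn_integral[OF m]) simp
  also have "\<dots> = sqrt (pi / s) ^ DIM('a)"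
    by (simp only: nn) (use s in simp)
  finally have "(\<integral>x. exp (- s * (norm (x::'a))\<^sup>2) \<partial>lborel) = sqrt (pi / s) ^ DIM('a)" .
  then show "(\<integral>x. exp (- s * (norm (x::'a))\<^sup>2) \<partial>lborel) > 0" using s by simp
qed


lemma int_shift:
  fixes w :: "'a::euclidean_space" and f :: "'a \<Rightarrow> real"
  assumes [measurable]: "f \<in> borel_measurable borel"
  shows "(\<integral>y. f (y - w) \<partial>lborel) = (\<integral>y. f y \<partial>lborel)"
proof -
  have "(\<integral>y. f y \<partial>lborel) = (\<integral>y. f y \<partial>distr lborel borel ((+) (-w)))"
    by (simp add: lborel_distr_plus)
  also have "\<dots> = (\<integral>y. f (-w + y) \<partial>lborel)"
    by (rule integral_distr) auto
  finally show ?thesis by simp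
qed

lemma scalar_id:
  fixes s m nx ny p v D :: real
  assumes "v > 0" "s > 0" and Dd: "D = 2 * v * s + m\<^sup>2"
  shows "s * ny + (nx - 2 * m * p + m\<^sup>2 * ny) / (2 * v)
       = D / (2 * v) * (ny - 2 * (m / D) * p + (m / D)\<^sup>2 * nx) + s / D * nx"
proof -
  have d: "D > 0" unfolding Dd using assms by (simp add: add_pos_nonneg)
  have "D / (2 * v) * (ny - 2 * (m / D) * p + (m / D)\<^sup>2 * nx) + s / D * nx
     = D * ny / (2 * v) - m * p / v + (m\<^sup>2 + 2 * v * s) * nx / (2 * v * D)"
    using d assms(1) by (simp add: field_simps power2_eq_square)
  also have "(m\<^sup>2 + 2 * v * s) = D" using Dd by simp
  also have "D * ny / (2 * v) - m * p / v + D * nx / (2 * v * D) = D * ny / (2 * v) - m * p / v + nx / (2 * v)"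
    using d by simp
  also have "\<dots> = s * ny + (nx - 2 * m * p + m\<^sup>2 * ny) / (2 * v)"
    using assms(1) unfolding Dd by (simp add: field_simps)
  finally show ?thesis by simp
qed


lemma scalar_id2:
  fixes s m nx ny p v D :: real
  assumes "v > 0" "s > 0" and Dd: "D = 2 * v * s + m\<^sup>2"
  shows "- s * ny + - (nx - 2 * m * p + m\<^sup>2 * ny) / (2 * v)
       = - (s / D) * nx + - (D / (2 * v)) * (ny - 2 * (m / D) * p + (m / D)\<^sup>2 * nx)"
proof -
  have "- s * ny + - (nx - 2 * m * p + m\<^sup>2 * ny) / (2 * v) = - (s * ny + (nx - 2 * m * p + m\<^sup>2 * ny) / (2 * v))"
    using assms(1) by (simp add: field_simps)
  also have "\<dots> = - (D / (2 * v) * (ny - 2 * (m / D) * p + (m / D)\<^sup>2 * nx) + s / D * nx)"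
    using scalar_id[OF assms] by simp
  also have "\<dots> = - (s / D) * nx + - (D / (2 * v)) * (ny - 2 * (m / D) * p + (m / D)\<^sup>2 * nx)"
    by simp
  finally show ?thesis .
qed

lemma norm_diff_scale_sq:
  fixes a b :: "'a::real_inner"
  shows "(norm (a - k *\<^sub>R b))\<^sup>2 = (norm a)\<^sup>2 - 2 * k * (a \<bullet> b) + k\<^sup>2 * (norm b)\<^sup>2"
  unfolding power2_norm_eq_inner
  by (simp add: inner_diff_left inner_diff_right inner_commute algebra_simps power2_eq_square)

lemma conv:
  fixes c s m :: real
  assumes c: "c > 0" and s: "s > 0" and m: "0 < m" "m < 1"
  shows "\<exists>c'>0. \<forall>x::real^'d. (\<integral>y. c * exp (- s * (norm y)\<^sup>2) * gauss_density (m *\<^sub>R y) (1 - m\<^sup>2) x \<partial>lborel)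
          = c' * exp (- (s / (2 * (1 - m\<^sup>2) * s + m\<^sup>2)) * (norm x)\<^sup>2)"
proof -
  define v where "v = 1 - m\<^sup>2"
  have "m * m < m" using m mult_strict_left_mono[of m 1 m] by simp
  then have v: "v > 0" unfolding v_def using m by (simp add: power2_eq_square)  (use \<open>m * m < m\<close> in linarith)
  define D where "D = 2 * v * s + m\<^sup>2"
  have D: "D > 0" unfolding D_def using v s by (simp add: add_pos_nonneg)
  define A where "A = D / (2 * v)"
  have A: "A > 0" unfolding A_def using D v by simp
  define C where "C = (2 * pi * v) powr (- real CARD('d) / 2)"
  have C: "C > 0" unfolding C_def using v by simp
  define I where "I = (\<integral>y. exp (- A * (norm (y::real^'d))\<^sup>2) \<partial>lborel)"
  have I: "I > 0" unfolding I_def using gauss_int(2)[OF A] .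
  show ?thesis
  proof (intro exI[of _ "c * C * I"] conjI allI)
    show "c * C * I > 0" using c C I by simp
    fix x :: "real^'d"
    have pw: "c * exp (- s * (norm y)\<^sup>2) * gauss_density (m *\<^sub>R y) (1 - m\<^sup>2) x
        = (c * C * exp (- (s / D) * (norm x)\<^sup>2)) * exp (- A * (norm (y - (m / D) *\<^sub>R x))\<^sup>2)" for y :: "real^'d"
    proof -
      have e: "- s * (norm y)\<^sup>2 + - (norm (x - m *\<^sub>R y))\<^sup>2 / (2 * v)
          = - (s / D) * (norm x)\<^sup>2 + - A * (norm (y - (m / D) *\<^sub>R x))\<^sup>2"
        using scalar_id2[OF v s D_def, of "(norm y)\<^sup>2" "(norm x)\<^sup>2" "x \<bullet> y"]
        unfolding norm_diff_scale_sq A_def inner_commute[of y x] .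
      have g: "gauss_density (m *\<^sub>R y) (1 - m\<^sup>2) x = C * exp (- (norm (x - m *\<^sub>R y))\<^sup>2 / (2 * v))"
        unfolding gauss_density_def C_def v_def by simp
      have "c * exp (- s * (norm y)\<^sup>2) * gauss_density (m *\<^sub>R y) (1 - m\<^sup>2) x
          = c * C * exp (- s * (norm y)\<^sup>2 + - (norm (x - m *\<^sub>R y))\<^sup>2 / (2 * v))"
        unfolding g exp_add by (simp add: mult_ac)
      also have "\<dots> = c * C * exp (- (s / D) * (norm x)\<^sup>2 + - A * (norm (y - (m / D) *\<^sub>R x))\<^sup>2)"
        by (simp only: e)
      also have "\<dots> = (c * C * exp (- (s / D) * (norm x)\<^sup>2)) * exp (- A * (norm (y - (m / D) *\<^sub>R x))\<^sup>2)"
        unfolding exp_add by (simp add: mult_ac)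
      finally show ?thesis .
    qed
    have "(\<integral>y. c * exp (- s * (norm y)\<^sup>2) * gauss_density (m *\<^sub>R y) (1 - m\<^sup>2) x \<partial>lborel)
        = (\<integral>y. (c * C * exp (- (s / D) * (norm x)\<^sup>2)) * exp (- A * (norm (y - (m / D) *\<^sub>R x))\<^sup>2) \<partial>lborel)"
      by (simp only: pw)
    also have "\<dots> = (c * C * exp (- (s / D) * (norm x)\<^sup>2)) * (\<integral>y. exp (- A * (norm (y - (m / D) *\<^sub>R x))\<^sup>2) \<partial>lborel)"
      by (rule integral_mult_right_zero)
    also have "(\<integral>y. exp (- A * (norm (y - (m / D) *\<^sub>R x))\<^sup>2) \<partial>lborel) = I"
      unfolding I_def by (rule int_shift[where f="\<lambda>y. exp (- A * (norm y)\<^sup>2)"]) measurable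
    finally show "(\<integral>y. c * exp (- s * (norm y)\<^sup>2) * gauss_density (m *\<^sub>R y) (1 - m\<^sup>2) x \<partial>lborel)
          = c * C * I * exp (- (s / (2 * (1 - m\<^sup>2) * s + m\<^sup>2)) * (norm x)\<^sup>2)"
      by (simp add: D_def v_def mult_ac)
  qed
qed


lemma poe_shape:
  fixes p :: "nat \<Rightarrow> real^'d \<Rightarrow> real" and c s :: "nat \<Rightarrow> real"
  assumes K: "K \<ge> 1"
    and h: "\<forall>k\<in>{1..K}. c k > 0 \<and> s k > 0 \<and> p k = (\<lambda>x. c k * exp (- s k * (norm x)\<^sup>2))"
  shows "\<exists>c'>0. PoE K p = (\<lambda>x. c' * exp (- ((\<Sum>k\<in>{1..K}. s k) / real K) * (norm x)\<^sup>2))"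
proof -
  define P where "P = (\<Prod>k\<in>{1..K}. c k)"
  have P: "P > 0" unfolding P_def using h by (intro prod_pos) auto
  define S where "S = (\<Sum>k\<in>{1..K}. s k)"
  define \<sigma> where "\<sigma> = S / real K"
  have S: "S > 0" unfolding S_def using h K by (intro sum_pos) auto
  have \<sigma>: "\<sigma> > 0" unfolding \<sigma>_def using S K by simp
  have pr: "(\<Prod>k\<in>{1..K}. p k x) = P * exp (- S * (norm x)\<^sup>2)" for x
  proof -
    have "(\<Prod>k\<in>{1..K}. p k x) = (\<Prod>k\<in>{1..K}. c k * exp (- s k * (norm x)\<^sup>2))"
      using h by (intro prod.cong) auto
    also have "\<dots> = P * (\<Prod>k\<in>{1..K}. exp (- s k * (norm x)\<^sup>2))"
      unfolding P_def by (rule prod.distrib)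
    also have "(\<Prod>k\<in>{1..K}. exp (- s k * (norm x)\<^sup>2)) = exp (\<Sum>k\<in>{1..K}. - s k * (norm x)\<^sup>2)"
      by (simp add: exp_sum)
    also have "(\<Sum>k\<in>{1..K}. - s k * (norm x)\<^sup>2) = - S * (norm x)\<^sup>2"
      unfolding S_def by (simp add: sum_distrib_right sum_negf)
    finally show ?thesis .
  qed
  have pw: "(\<Prod>k\<in>{1..K}. p k x) powr (1 / real K) = P powr (1 / real K) * exp (- \<sigma> * (norm x)\<^sup>2)" for x
    unfolding pr using P K by (simp add: powr_mult exp_powr_real \<sigma>_def)
  define I where "I = (\<integral>y. exp (- \<sigma> * (norm (y::real^'d))\<^sup>2) \<partial>lborel)"
  have I: "I > 0" unfolding I_def using gauss_int(2)[OF \<sigma>] .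
  have Z: "(\<integral>y. (\<Prod>k\<in>{1..K}. p k y) powr (1 / real K) \<partial>lborel) = P powr (1 / real K) * I"
    unfolding pw I_def by (rule integral_mult_right_zero)
  show ?thesis
  proof (intro exI[of _ "1 / I"] conjI ext)
    show "1 / I > 0" using I by simp
    fix x
    show "PoE K p x = 1 / I * exp (- ((\<Sum>k\<in>{1..K}. s k) / real K) * (norm x)\<^sup>2)"
      unfolding PoE_def unfolding Z unfolding pw using P I by (simp add: \<sigma>_def S_def)
  qed
qed

lemma tangent_g:
  fixes v m x S :: real
  assumes v: "v > 0" and m: "m \<noteq> 0" and x: "x > 0" and S: "S > 0"
  shows "x / (2 * v * x + m\<^sup>2) \<le> S / (2 * v * S + m\<^sup>2) + m\<^sup>2 / (2 * v * S + m\<^sup>2)\<^sup>2 * (x - S)"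
    and "x \<noteq> S \<Longrightarrow> x / (2 * v * x + m\<^sup>2) < S / (2 * v * S + m\<^sup>2) + m\<^sup>2 / (2 * v * S + m\<^sup>2)\<^sup>2 * (x - S)"
proof -
  define u where "u = 2 * v * x + m\<^sup>2"
  define U where "U = 2 * v * S + m\<^sup>2"
  have u: "u > 0" unfolding u_def using v x by (simp add: add_pos_nonneg)
  have U: "U > 0" unfolding U_def using v S by (simp add: add_pos_nonneg)
  have id: "S * U * u + m\<^sup>2 * u * (x - S) - x * U\<^sup>2 = 2 * v * m\<^sup>2 * (x - S)\<^sup>2"
    unfolding U_def u_def by (simp add: algebra_simps power2_eq_square)
  have eq: "S / U + m\<^sup>2 / U\<^sup>2 * (x - S) - x / u = (S * U * u + m\<^sup>2 * u * (x - S) - x * U\<^sup>2) / (u * U\<^sup>2)"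
    using u U by (simp add: field_simps power2_eq_square)
  have "0 \<le> 2 * v * m\<^sup>2 * (x - S)\<^sup>2" using v by simp
  then have "0 \<le> S / U + m\<^sup>2 / U\<^sup>2 * (x - S) - x / u" unfolding eq id using u U by simp
  then show "x / (2 * v * x + m\<^sup>2) \<le> S / (2 * v * S + m\<^sup>2) + m\<^sup>2 / (2 * v * S + m\<^sup>2)\<^sup>2 * (x - S)"
    unfolding u_def U_def by simp
  assume "x \<noteq> S"
  then have "0 < 2 * v * m\<^sup>2 * (x - S)\<^sup>2" using v m by simp
  then have "0 < S / U + m\<^sup>2 / U\<^sup>2 * (x - S) - x / u" unfolding eq id using u U by simp
  then show "x / (2 * v * x + m\<^sup>2) < S / (2 * v * S + m\<^sup>2) + m\<^sup>2 / (2 * v * S + m\<^sup>2)\<^sup>2 * (x - S)"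
    unfolding u_def U_def by simp
qed

lemma jensen_g:
  fixes s :: "nat \<Rightarrow> real" and v m :: real
  assumes K: "K \<ge> 1" and v: "v > 0" and m: "m \<noteq> 0" and pos: "\<forall>k\<in>{1..K}. s k > 0"
    and ne: "\<exists>k\<in>{1..K}. s k \<noteq> (\<Sum>k\<in>{1..K}. s k) / real K"
  shows "(\<Sum>k\<in>{1..K}. s k / (2 * v * s k + m\<^sup>2)) / real K
        < ((\<Sum>k\<in>{1..K}. s k) / real K) / (2 * v * ((\<Sum>k\<in>{1..K}. s k) / real K) + m\<^sup>2)"
proof -
  define S where "S = (\<Sum>k\<in>{1..K}. s k) / real K"
  have S: "S > 0" unfolding S_def using pos K by (intro divide_pos_pos sum_pos) auto
  define G where "G = S / (2 * v * S + m\<^sup>2)"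
  define D where "D = m\<^sup>2 / (2 * v * S + m\<^sup>2)\<^sup>2"
  have "(\<Sum>k\<in>{1..K}. s k / (2 * v * s k + m\<^sup>2)) < (\<Sum>k\<in>{1..K}. G + D * (s k - S))"
  proof (rule sum_strict_mono_ex1)
    show "finite {1..K}" by simp
    show "\<forall>k\<in>{1..K}. s k / (2 * v * s k + m\<^sup>2) \<le> G + D * (s k - S)"
      using tangent_g(1)[OF v m _ S] pos unfolding G_def D_def by auto
    show "\<exists>k\<in>{1..K}. s k / (2 * v * s k + m\<^sup>2) < G + D * (s k - S)"
      using tangent_g(2)[OF v m _ S] pos ne unfolding G_def D_def S_def by auto
  qed
  also have "(\<Sum>k\<in>{1..K}. G + D * (s k - S)) = real K * G + D * ((\<Sum>k\<in>{1..K}. s k) - real K * S)"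
    by (simp add: sum.distrib sum_distrib_left sum_subtractf algebra_simps)
  also have "(\<Sum>k\<in>{1..K}. s k) - real K * S = 0" unfolding S_def using K by simp
  finally have "(\<Sum>k\<in>{1..K}. s k / (2 * v * s k + m\<^sup>2)) < real K * G" by simp
  then show ?thesis using K unfolding G_def S_def by (simp add: divide_less_eq mult.commute)
qed


lemma beta_int_pos:
  fixes beta :: "real \<Rightarrow> real"
  assumes "continuous_on {0..T} beta" "\<forall>s\<in>{0..T}. beta s > 0" "0 < t" "t \<le> T"
  shows "integral {0..t} beta > 0"
proof -
  have c: "continuous_on {0..t} beta" using assms(1) by (rule continuous_on_subset) (use assms in auto)
  obtain x0 where x0: "x0 \<in> {0..t}" "\<forall>y\<in>{0..t}. beta x0 \<le> beta y"
    using continuous_attains_inf[OF compact_Icc _ c] assms(3) by auto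
  have b0: "beta x0 > 0" using assms x0 by auto
  have "integral {0..t} (\<lambda>_. beta x0) \<le> integral {0..t} beta"
    by (rule integral_le) (use c x0 in \<open>auto intro: integrable_continuous_interval\<close>)
  moreover have "integral {0..t} (\<lambda>_. beta x0) = t * beta x0" using assms(3) by simp
  moreover have "t * beta x0 > 0" using b0 assms(3) by simp
  ultimately show ?thesis by linarith
qed

lemma gauss_shape:
  "gauss_density (0::real^'d) a = (\<lambda>x. (2 * pi * a) powr (- real CARD('d) / 2) * exp (- (1 / (2 * a)) * (norm x)\<^sup>2))"
  unfolding gauss_density_def by (simp add: fun_eq_iff)

theorem proposition2:
  fixes K :: nat and alpha :: "nat \<Rightarrow> real" and beta :: "real \<Rightarrow> real"
    and T t :: real
  assumes "K > 1"
    and "\<forall>k\<in>{1..K}. alpha k > 0"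
    and "continuous_on {0..T} beta" and "\<forall>s\<in>{0..T}. beta s > 0"
    and "0 < t" and "t \<le> T"
    and "\<not> (\<forall>i\<in>{1..K}. \<forall>j\<in>{1..K}. alpha i = alpha j)"
  shows "vp_marginal beta t
           (PoE K (\<lambda>k. gauss_density (0 :: real ^ 'd) (alpha k)))
         \<noteq> PoE K (\<lambda>k. vp_marginal beta t (gauss_density (0 :: real ^ 'd) (alpha k)))"
proof
  assume EQ: "vp_marginal beta t (PoE K (\<lambda>k. gauss_density (0 :: real ^ 'd) (alpha k)))
         = PoE K (\<lambda>k. vp_marginal beta t (gauss_density (0 :: real ^ 'd) (alpha k)))"
  have K: "K \<ge> 1" using assms(1) by simp
  define m where "m = exp (- integral {0..t} beta)"
  have m0: "0 < m" unfolding m_def by simp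
  have m1: "m < 1" unfolding m_def using beta_int_pos[OF assms(3-6)] by simp
  define v where "v = 1 - m\<^sup>2"
  have "m * m < m" using m0 m1 mult_strict_left_mono[of m 1 m] by simp
  then have v: "v > 0" unfolding v_def using m1 by (simp add: power2_eq_square)
  define g where "g = (\<lambda>x::real. x / (2 * v * x + m\<^sup>2))"
  define s where "s = (\<lambda>k. 1 / (2 * alpha k))"
  have vp: "vp_marginal beta t q = (\<lambda>x. \<integral>y. q y * gauss_density (m *\<^sub>R y) (1 - m\<^sup>2) x \<partial>lborel)" for q :: "real^'d \<Rightarrow> real"
    unfolding vp_marginal_def m_def Let_def by simp
  have "\<exists>cP>0. PoE K (\<lambda>k. gauss_density (0 :: real ^ 'd) (alpha k))
      = (\<lambda>x. cP * exp (- ((\<Sum>k\<in>{1..K}. s k) / real K) * (norm x)\<^sup>2))"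
    by (rule poe_shape[OF K, of "\<lambda>k. (2 * pi * alpha k) powr (- real CARD('d) / 2)"])
      (use assms(2) in \<open>auto simp: gauss_shape s_def\<close>)
  then obtain cP where cP: "cP > 0" and P: "PoE K (\<lambda>k. gauss_density (0 :: real ^ 'd) (alpha k))
      = (\<lambda>x. cP * exp (- ((\<Sum>k\<in>{1..K}. s k) / real K) * (norm x)\<^sup>2))"
    by blast
  define S where "S = (\<Sum>k\<in>{1..K}. s k) / real K"
  have S: "S > 0" unfolding S_def s_def using assms(2) K by (intro divide_pos_pos sum_pos) auto
  obtain cL where cL: "cL > 0" and L: "\<forall>x::real^'d. (\<integral>y. cP * exp (- S * (norm y)\<^sup>2) * gauss_density (m *\<^sub>R y) (1 - m\<^sup>2) x \<partial>lborel)
          = cL * exp (- (S / (2 * (1 - m\<^sup>2) * S + m\<^sup>2)) * (norm x)\<^sup>2)"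
    using conv[OF cP S m0 m1] by blast
  have LHS: "vp_marginal beta t (PoE K (\<lambda>k. gauss_density (0 :: real ^ 'd) (alpha k)))
      = (\<lambda>x. cL * exp (- g S * (norm x)\<^sup>2))"
    unfolding vp P S_def[symmetric] using L by (simp add: g_def v_def)
  have "\<forall>k\<in>{1..K}. \<exists>c'. c' > 0 \<and> vp_marginal beta t (gauss_density (0 :: real ^ 'd) (alpha k))
      = (\<lambda>x. c' * exp (- g (s k) * (norm x)\<^sup>2))"
  proof
    fix k assume k: "k \<in> {1..K}"
    have ak: "alpha k > 0" using k assms(2) by auto
    have sk: "s k > 0" unfolding s_def using ak by simp
    have C: "(2 * pi * alpha k) powr (- real CARD('d) / 2) > 0" using ak by simp
    obtain c' where c': "c' > 0" and L: "\<forall>x::real^'d. (\<integral>y. (2 * pi * alpha k) powr (- real CARD('d) / 2) * exp (- s k * (norm y)\<^sup>2) * gauss_density (m *\<^sub>R y) (1 - m\<^sup>2) x \<partial>lborel)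
          = c' * exp (- (s k / (2 * (1 - m\<^sup>2) * s k + m\<^sup>2)) * (norm x)\<^sup>2)"
      using conv[OF C sk m0 m1] by blast
    show "\<exists>c'. c' > 0 \<and> vp_marginal beta t (gauss_density (0 :: real ^ 'd) (alpha k))
      = (\<lambda>x. c' * exp (- g (s k) * (norm x)\<^sup>2))"
      by (intro exI[of _ c'] conjI c') (use L in \<open>simp add: vp gauss_shape s_def g_def v_def\<close>)
  qed
  then obtain cc where cc: "\<forall>k\<in>{1..K}. cc k > 0 \<and> vp_marginal beta t (gauss_density (0 :: real ^ 'd) (alpha k))
      = (\<lambda>x. cc k * exp (- g (s k) * (norm x)\<^sup>2))"
    by metis
  have gpos: "\<forall>k\<in>{1..K}. g (s k) > 0"
  proof
    fix k assume "k \<in> {1..K}"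
    then have "s k > 0" using assms(2) by (simp add: s_def)
    then show "g (s k) > 0" unfolding g_def using v by (intro divide_pos_pos add_pos_nonneg mult_pos_pos) auto
  qed
  obtain cR where cR: "cR > 0" and RHS: "PoE K (\<lambda>k. vp_marginal beta t (gauss_density (0 :: real ^ 'd) (alpha k)))
      = (\<lambda>x. cR * exp (- ((\<Sum>k\<in>{1..K}. g (s k)) / real K) * (norm x)\<^sup>2))"
    using poe_shape[OF K, of cc "\<lambda>k. g (s k)" "\<lambda>k. vp_marginal beta t (gauss_density (0 :: real ^ 'd) (alpha k))"]
      cc gpos by auto
  have E: "cL * exp (- g S * (norm x)\<^sup>2) = cR * exp (- ((\<Sum>k\<in>{1..K}. g (s k)) / real K) * (norm x)\<^sup>2)" for x :: "real^'d"
    using fun_cong[OF EQ, of x] unfolding LHS RHS by simp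
  have "cL = cR" using E[of 0] by simp
  obtain b :: "real^'d" where b: "b \<in> Basis" using nonempty_Basis by blast
  have nb: "norm b = 1" using b by simp
  have "exp (- g S) = exp (- ((\<Sum>k\<in>{1..K}. g (s k)) / real K))"
    using E[of b] \<open>cL = cR\<close> cL nb by simp
  then have gS: "g S = (\<Sum>k\<in>{1..K}. g (s k)) / real K" by simp
  obtain i j where ij: "i \<in> {1..K}" "j \<in> {1..K}" "alpha i \<noteq> alpha j" using assms(7) by blast
  have "s i \<noteq> s j" using ij assms(2) unfolding s_def by (auto simp: field_simps)
  then have ne: "\<exists>k\<in>{1..K}. s k \<noteq> (\<Sum>k\<in>{1..K}. s k) / real K" using ij by metis
  have spos: "\<forall>k\<in>{1..K}. s k > 0" using assms(2) unfolding s_def by auto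
  have "(\<Sum>k\<in>{1..K}. g (s k)) / real K < g S"
    using jensen_g[OF K v _ spos ne, of m] m0 unfolding g_def S_def by simp
  with gS show False by simp
qed

end
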